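(* Let $\mathbb{F}$ be a field and let $(\mathbb{F}(\alpha,\beta),\sigma)$ be a bivariate difference field extension of $\mathbb{F}$ with $\sigma|_{\mathbb{F}}=\mathrm{id}$, $\sigma(\alpha)=\beta$, $\sigma(\beta)=u\alpha+v\beta$ ($u\in\mathbb{F}\setminus\{0\}$, $v\in\mathbb{F}$). Let $A=\begin{pmatrix}0&u\\1&v\end{pmatrix}$ and assume that $A$ has two distinct eigenvalues $\lambda_1\neq\lambda_2$ in $\mathbb{F}$ such that $\lambda_1/\lambda_2$ is not a root of unity. Let $a,b\in\mathbb{F}[\alpha,\beta]$ be two relatively prime homogeneous polynomials. Then $\mathrm{Spr}_\sigma(a,b)$ is a finite set.
   Context: A bivariate difference field extension $(\mathbb{F}(\alpha,\beta),\sigma)$ of a difference field $(\mathbb{F},\sigma)$ is the rational function field $\mathbb{F}(\alpha,\beta)$ in two algebraically independent transcendental elements $\alpha,\beta$ over $\mathbb{F}$, together with an automorphism $\sigma$ of $\mathbb{F}(\alpha,\beta)$ extending $\sigma$ on $\mathbb{F}$ and satisfying $\sigma(\alpha)=\beta$, $\sigma(\beta)=u\alpha+v\beta$. $\deg$ denotes total degree in $\alpha,\beta$. For nonzero $p,q\in\mathbb{F}[\alpha,\beta]$, the spread is $\mathrm{Spr}_\sigma(p,q)=\{m\in\mathbb{N} : \deg(\gcd(p,\sigma^m q))>0\}$. *)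

theory Defs
  imports "HOL-Computational_Algebra.Computational_Algebra" "Jordan_Normal_Form.Char_Poly"
begin

text \<open>Bivariate polynomials F[alpha,beta] are represented as 'a poly poly:
  the outer variable is beta, the inner variable (coefficients) is alpha.
  The monomial alpha^j beta^i has coefficient coeff (coeff p i) j.\<close>

definition bv_alpha :: "'a::comm_ring_1 poly poly" where
  "bv_alpha = [:[:0, 1:]:]"

definition bv_beta :: "'a::comm_ring_1 poly poly" where
  "bv_beta = [:0, 1:]"

definition bv_const :: "'a::comm_ring_1 \<Rightarrow> 'a poly poly" where
  "bv_const c = [:[:c:]:]"

definition bv_eval :: "'a::comm_ring_1 poly poly \<Rightarrow> 'a poly poly \<Rightarrow> 'a poly poly \<Rightarrow> 'a poly poly" where
  "bv_eval p x y = (\<Sum>i\<le>degree p. \<Sum>j\<le>degree (coeff p i).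
       bv_const (coeff (coeff p i) j) * x ^ j * y ^ i)"

definition bv_sigma :: "'a::comm_ring_1 \<Rightarrow> 'a \<Rightarrow> 'a poly poly \<Rightarrow> 'a poly poly" where
  "bv_sigma u v p = bv_eval p bv_beta (bv_const u * bv_alpha + bv_const v * bv_beta)"

definition total_degree :: "'a::zero poly poly \<Rightarrow> nat" where
  "total_degree p = Max (insert 0 {i + j | i j. coeff (coeff p i) j \<noteq> 0})"

definition homogeneous :: "'a::zero poly poly \<Rightarrow> bool" where
  "homogeneous p \<longleftrightarrow> (\<exists>d. \<forall>i j. coeff (coeff p i) j \<noteq> 0 \<longrightarrow> i + j = d)"

definition spread :: "'a::field_gcd \<Rightarrow> 'a \<Rightarrow> 'a poly poly \<Rightarrow> 'a poly poly \<Rightarrow> nat set" where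
  "spread u v p q = {m. total_degree (gcd p ((bv_sigma u v ^^ m) q)) > 0}"

definition root_of_unity :: "'a::field \<Rightarrow> bool" where
  "root_of_unity z \<longleftrightarrow> (\<exists>n>0. z ^ n = 1)"

definition shift_matrix :: "'a::field \<Rightarrow> 'a \<Rightarrow> 'a mat" where
  "shift_matrix u v = mat_of_rows_list 2 [[0, u], [1, v]]"

end

theory Submission
  imports Defs
begin

interpretation bvc: comm_ring_hom "bv_const :: 'a::comm_ring_1 \<Rightarrow> 'a poly poly"
  by unfold_locales (auto simp: bv_const_def one_pCons)

lemma bv_eval_alt:
  "bv_eval p x y = poly (map_poly (\<lambda>c. poly (map_poly bv_const c) x) p) y"
proof -
  have h: "poly (map_poly bv_const c) x = (\<Sum>j\<le>degree c. bv_const (coeff c j) * x ^ j)" for c :: "'a poly"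
    using eval_poly_as_sum[of bv_const c x] by (simp add: eval_poly_def mult.commute)
  have "poly (map_poly (\<lambda>c. poly (map_poly bv_const c) x) p) y
     = (\<Sum>i\<le>degree p. y ^ i * poly (map_poly bv_const (coeff p i)) x)"
    using eval_poly_as_sum[of "\<lambda>c. poly (map_poly bv_const c) x" p y] by (simp add: eval_poly_def)
  also have "\<dots> = bv_eval p x y"
    unfolding bv_eval_def h by (simp add: sum_distrib_left mult_ac)
  finally show ?thesis by simp
qed

lemma bv_eval_hom:
  fixes x y :: "'a::comm_ring_1 poly poly"
  shows "comm_ring_hom (\<lambda>p. bv_eval p x y)"
proof -
  interpret m1: map_poly_comm_ring_hom "bv_const :: 'a \<Rightarrow> 'a poly poly" ..
  interpret h: comm_ring_hom "\<lambda>c. poly (map_poly (bv_const :: 'a \<Rightarrow> 'a poly poly) c) x"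
    by unfold_locales (auto simp: m1.hom_mult m1.hom_add)
  interpret m2: map_poly_comm_ring_hom "\<lambda>c. poly (map_poly (bv_const :: 'a \<Rightarrow> 'a poly poly) c) x" ..
  show ?thesis unfolding bv_eval_alt
    by unfold_locales (auto simp: m2.hom_mult m2.hom_add)
qed

lemma bv_eval_const[simp]: "bv_eval (bv_const c) x y = bv_const c"
  by (simp add: bv_eval_def bv_const_def)
lemma bv_eval_alpha[simp]: "bv_eval bv_alpha x y = x"
  by (simp add: bv_eval_def bv_const_def bv_alpha_def bvc.hom_one[unfolded bv_const_def] one_pCons[symmetric])
lemma bv_eval_beta[simp]: "bv_eval bv_beta x y = y"
  by (simp add: bv_eval_def bv_const_def bv_beta_def bvc.hom_one[unfolded bv_const_def] one_pCons[symmetric])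

lemma bv_monom: "bv_const c * bv_alpha ^ j * bv_beta ^ i = monom (monom c j) i"
proof -
  have "bv_alpha ^ j = [:monom (1::'a) j:]"
    by (simp add: bv_alpha_def poly_const_pow x_as_monom monom_power)
  moreover have "bv_beta ^ i = monom (1::'a poly) i"
    by (simp add: bv_beta_def x_as_monom monom_power)
  ultimately show ?thesis
    by (simp add: bv_const_def monom_0[symmetric] mult_monom)
qed


lemma bv_repr: "(\<Sum>i\<le>degree p. \<Sum>j\<le>degree (coeff p i). monom (monom (coeff (coeff p i) j) j) i) = p"
  by (simp add: monom_sum[symmetric] poly_as_sum_of_monoms)

lemma bv_eval_id: "bv_eval p bv_alpha bv_beta = p"
  unfolding bv_eval_def bv_monom by (rule bv_repr)

lemma coeff_bvsum:
  fixes p :: "'a::comm_ring_1 poly poly"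
  shows "coeff (coeff (\<Sum>i\<le>degree p. \<Sum>j\<le>degree (coeff p i). monom (monom (g i j * coeff (coeff p i) j) j) i) a) b
    = g a b * coeff (coeff p a) b"
proof -
  have "(\<Sum>i\<le>degree p. \<Sum>j\<le>degree (coeff p i). monom (monom (g i j * coeff (coeff p i) j) j) i)
     = (\<Sum>i\<le>degree p. monom (\<Sum>j\<le>degree (coeff p i). monom (g i j * coeff (coeff p i) j) j) i)"
    by (simp add: monom_sum)
  moreover have "coeff (\<Sum>i\<le>degree p. monom (\<Sum>j\<le>degree (coeff p i). monom (g i j * coeff (coeff p i) j) j) i) a
     = (if a \<le> degree p then (\<Sum>j\<le>degree (coeff p a). monom (g a j * coeff (coeff p a) j) j) else 0)"
    by (simp add: coeff_sum)
  ultimately show ?thesis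
    by (auto simp: coeff_sum coeff_eq_0 not_le)
qed

definition diag :: "'a::comm_ring_1 \<Rightarrow> 'a \<Rightarrow> 'a poly poly \<Rightarrow> 'a poly poly" where
  "diag s1 s2 p = bv_eval p (bv_const s1 * bv_alpha) (bv_const s2 * bv_beta)"

lemma coeff_diag: "coeff (coeff (diag s1 s2 p) i) j = s1 ^ j * s2 ^ i * coeff (coeff p i) j"
proof -
  have "diag s1 s2 p = (\<Sum>i\<le>degree p. \<Sum>j\<le>degree (coeff p i).
      monom (monom ((s1 ^ j * s2 ^ i) * coeff (coeff p i) j) j) i)"
    unfolding diag_def bv_eval_def
    by (intro sum.cong refl) (simp add: power_mult_distrib bvc.hom_power bvc.hom_mult flip: bv_monom; simp add: ac_simps)
  then show ?thesis by (simp only: coeff_bvsum)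
qed

lemma hom_unique:
  assumes "comm_ring_hom f" "\<And>c. f (bv_const c) = bv_const c"
  shows "f p = bv_eval p (f bv_alpha) (f bv_beta)"
proof -
  interpret comm_ring_hom f by fact
  have "f p = f (bv_eval p bv_alpha bv_beta)" by (simp add: bv_eval_id)
  also have "\<dots> = bv_eval p (f bv_alpha) (f bv_beta)"
    unfolding bv_eval_def by (simp add: hom_sum hom_mult hom_power assms(2))
  finally show ?thesis .
qed

lemma bv_eval_comp:
  "bv_eval (bv_eval p x y) x' y' = bv_eval p (bv_eval x x' y') (bv_eval y x' y')"
proof -
  interpret h1: comm_ring_hom "\<lambda>p. bv_eval p x y" by (rule bv_eval_hom)
  interpret h2: comm_ring_hom "\<lambda>p. bv_eval p x' y'" by (rule bv_eval_hom)
  have "comm_ring_hom (\<lambda>p. bv_eval (bv_eval p x y) x' y')"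
    by unfold_locales (simp_all add: h1.hom_mult h1.hom_add h2.hom_mult h2.hom_add)
  from hom_unique[OF this] show ?thesis by simp
qed


lemma is_unit_bv: "is_unit (g :: 'a::field_gcd poly poly) \<longleftrightarrow> (\<exists>c. c \<noteq> 0 \<and> g = bv_const c)"
proof
  assume "is_unit g"
  then obtain c where c: "g = [:c:]" "is_unit c" by (auto simp: is_unit_poly_iff)
  obtain d where "c = [:d:]" "is_unit d" using c(2) is_unit_poly_iff[of c] by blast
  with c show "\<exists>c. c \<noteq> 0 \<and> g = bv_const c" by (auto simp: bv_const_def)
next
  assume "\<exists>c. c \<noteq> 0 \<and> g = bv_const c"
  then show "is_unit g" by (auto simp: is_unit_poly_iff bv_const_def)
qed

lemma total_degree_const: "total_degree (bv_const c) = 0"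
proof -
  have "{i + j |i j. coeff (coeff (bv_const c) i) j \<noteq> 0} \<subseteq> {0}"
    by (auto simp: bv_const_def coeff_const split: if_splits)
  then have eq: "insert 0 {i + j |i j. coeff (coeff (bv_const c) i) j \<noteq> 0} = {0}"
    by blast
  show ?thesis unfolding total_degree_def eq by simp
qed

lemma assoc_const:
  fixes x y :: "'a::field_gcd poly poly"
  assumes "normalize x = normalize y" "x \<noteq> 0"
  shows "\<exists>c. c \<noteq> 0 \<and> y = bv_const c * x"
proof -
  from assms(1) have "x dvd y" "y dvd x" by (simp_all add: associated_iff_dvd)
  obtain k where k: "y = x * k" using \<open>x dvd y\<close> by (elim dvdE)
  obtain l where l: "x = y * l" using \<open>y dvd x\<close> by (elim dvdE)
  have "x * (k * l) = x * 1" using k l by (metis mult.assoc mult_1_right)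
  with assms(2) have "k * l = 1" by (metis mult_cancel_left)
  then have "is_unit k" by (metis dvd_triv_left)
  then obtain c where "c \<noteq> 0" "k = bv_const c" by (auto simp: is_unit_bv)
  with k show ?thesis by (auto simp: ac_simps)
qed

lemma aut_prime_elem:
  fixes f g :: "'a::field_gcd poly poly \<Rightarrow> 'a poly poly"
  assumes "comm_ring_hom f" "comm_ring_hom g" "\<And>x. g (f x) = x" "\<And>x. f (g x) = x"
    and "prime_elem p"
  shows "prime_elem (f p)"
proof -
  interpret f: comm_ring_hom f by fact
  interpret g: comm_ring_hom g by fact
  have "f p \<noteq> 0"
  proof
    assume "f p = 0"
    then have "p = g 0" using assms(3)[of p] by simp
    then have "p = 0" by (simp add: g.hom_zero)
    with assms(5) show False by simp
  qed
  moreover have "\<not> is_unit (f p)"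
    using g.hom_dvd_1[of "f p"] assms(3)[of p] assms(5) by (auto simp: prime_elem_def)
  moreover have "f p dvd a \<or> f p dvd b" if "f p dvd a * b" for a b
  proof -
    have "p dvd g a * g b" using g.hom_dvd[OF that] assms(3) by (simp add: g.hom_mult)
    then have "p dvd g a \<or> p dvd g b" using assms(5) by (simp add: prime_elem_dvd_mult_iff)
    then show ?thesis using f.hom_dvd assms(4) by metis
  qed
  ultimately show ?thesis by (auto simp: prime_elem_def)
qed

lemma diag_hom: "comm_ring_hom (diag s1 s2)"
  unfolding diag_def[abs_def] by (rule bv_eval_hom)

lemma diag_comp: "diag a1 a2 (diag b1 b2 p) = diag (a1 * b1) (a2 * b2) p"
  by (intro poly_eqI) (simp add: coeff_diag power_mult_distrib ac_simps)

lemma diag_one: "diag 1 1 p = p"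
  by (intro poly_eqI) (simp add: coeff_diag)

lemma diag_const_mult: "diag a1 a2 (bv_const c * p) = bv_const c * diag a1 a2 p"
proof -
  interpret comm_ring_hom "diag a1 a2" by (rule diag_hom)
  have "diag a1 a2 (bv_const c * p) = diag a1 a2 (bv_const c) * diag a1 a2 p" by (rule hom_mult)
  then show ?thesis by (simp add: diag_def)
qed

lemma diag_inv:
  fixes s1 s2 :: "'a::field"
  assumes "s1 \<noteq> 0" "s2 \<noteq> 0"
  shows "diag (inverse s1) (inverse s2) (diag s1 s2 p) = p"
    "diag s1 s2 (diag (inverse s1) (inverse s2) p) = p"
  using assms by (simp_all add: diag_comp diag_one)

lemma diag_prime_elem:
  fixes s1 s2 :: "'a::field_gcd"
  assumes "s1 \<noteq> 0" "s2 \<noteq> 0" "prime_elem p"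
  shows "prime_elem (diag s1 s2 p)"
  by (rule aut_prime_elem[OF diag_hom diag_hom diag_inv(1)[OF assms(1,2)] diag_inv(2)[OF assms(1,2)] assms(3)])

lemma diag_shift:
  fixes s1 s2 :: "'a::field_gcd"
  assumes "s1 \<noteq> 0" "s2 \<noteq> 0" "n < n'"
    and "diag (s1 ^ n') (s2 ^ n') q = bv_const d * diag (s1 ^ n) (s2 ^ n) q"
  shows "diag (s1 ^ (n' - n)) (s2 ^ (n' - n)) q = bv_const d * q"
proof -
  have e: "inverse (s ^ n) * s ^ n' = s ^ (n' - n)" if "s \<noteq> 0" for s :: 'a
  proof -
    have "s ^ n' = s ^ n * s ^ (n' - n)" using assms(3) by (simp flip: power_add)
    then show ?thesis using that by (simp add: field_simps)
  qed
  have "diag (inverse (s1 ^ n)) (inverse (s2 ^ n)) (diag (s1 ^ n') (s2 ^ n') q)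
      = bv_const d * diag (inverse (s1 ^ n)) (inverse (s2 ^ n)) (diag (s1 ^ n) (s2 ^ n) q)"
    by (simp add: assms(4) diag_const_mult)
  then show ?thesis using assms(1,2) by (simp add: diag_comp e diag_one)
qed

lemma diag_pow:
  assumes "diag s1 s2 b = bv_const c * b"
  shows "diag (s1 ^ n) (s2 ^ n) b = bv_const (c ^ n) * b"
proof (induction n)
  case 0 then show ?case by (simp add: diag_one bvc.hom_one)
next
  case (Suc n)
  have "diag (s1 ^ Suc n) (s2 ^ Suc n) b = diag (s1 ^ n) (s2 ^ n) (diag s1 s2 b)"
    by (simp add: diag_comp ac_simps)
  also have "\<dots> = bv_const c * (bv_const (c ^ n) * b)"
    by (simp add: assms diag_const_mult Suc)
  finally show ?case by (simp add: bvc.hom_mult ac_simps)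
qed


lemma coeff_const_mult: "coeff (coeff (bv_const d * q) i) j = d * coeff (coeff q i) j"
  by (simp add: bv_const_def)

lemma pow_inj:
  fixes t :: "'a::field"
  assumes "t \<noteq> 0" "\<not> root_of_unity t" "t ^ a = t ^ b"
  shows "a = b"
proof (rule ccontr)
  assume ne: "a \<noteq> b"
  have *: False if "x < y" "t ^ x = t ^ y" for x y
  proof -
    have "t ^ y = t ^ x * t ^ (y - x)" using that(1) by (simp flip: power_add)
    with that(2) assms(1) have "t ^ (y - x) = 1" by simp
    moreover have "y - x > 0" using that(1) by simp
    ultimately show False using assms(2) unfolding root_of_unity_def by blast
  qed
  from ne show False
    using *[of a b] *[of b a] assms(3) by (cases "a < b") auto
qed

lemma eigen_factor:
  fixes s1 s2 c :: "'a::field_gcd"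
  assumes "s1 \<noteq> 0" "s2 \<noteq> 0" "b \<noteq> 0" "diag s1 s2 b = bv_const c * b" "prime_elem q" "q dvd b"
  shows "\<exists>k>0. \<exists>d. diag (s1 ^ k) (s2 ^ k) q = bv_const d * q"
proof -
  have c0: "c \<noteq> 0"
  proof
    assume "c = 0"
    then have "diag s1 s2 b = 0" using assms(4) by (simp add: bvc.hom_zero)
    then have "b = diag (inverse s1) (inverse s2) 0" using diag_inv(1)[OF assms(1,2), of b] by simp
    also have "\<dots> = 0" using diag_const_mult[of "inverse s1" "inverse s2" 0 0] by (simp add: bvc.hom_zero)
    finally show False using assms(3) by simp
  qed
  define Q where "Q n = diag (s1 ^ n) (s2 ^ n) q" for n
  have Qd: "Q n dvd b" for n
  proof -
    interpret comm_ring_hom "diag (s1 ^ n) (s2 ^ n)" by (rule diag_hom)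
    have "Q n dvd diag (s1 ^ n) (s2 ^ n) b" unfolding Q_def using assms(6) by (rule hom_dvd)
    also have "\<dots> = bv_const (c ^ n) * b" by (rule diag_pow[OF assms(4)])
    finally show ?thesis
      using c0 by (metis dvd_mult_unit_iff' is_unit_bv power_not_zero)
  qed
  have Qp: "prime_elem (Q n)" for n
    unfolding Q_def by (rule diag_prime_elem) (use assms in auto)
  have "(\<lambda>n. normalize (Q n)) ` UNIV \<subseteq> prime_factors b"
    using Qd Qp assms(3) by (auto intro!: prime_factorsI dvd_trans[OF normalize_dvd_iff[THEN iffD2]])
  then have "finite ((\<lambda>n. normalize (Q n)) ` UNIV)"
    by (rule finite_subset) simp
  then have "\<not> inj (\<lambda>n. normalize (Q n))"
    using finite_imageD by blast
  then obtain n n' where nn: "n \<noteq> n'" "normalize (Q n) = normalize (Q n')"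
    unfolding inj_def by blast
  have "\<exists>n n'. n < n' \<and> normalize (Q n) = normalize (Q n')"
  proof (cases "n < n'")
    case True then show ?thesis using nn by blast
  next
    case False then have "n' < n" using nn(1) by simp
    then show ?thesis using nn(2) by metis
  qed
  then obtain n n' where nn: "n < n'" "normalize (Q n) = normalize (Q n')" by blast
  have "Q n \<noteq> 0" using Qp[of n] by auto
  from assoc_const[OF nn(2) this] obtain d where "Q n' = bv_const d * Q n" by blast
  then have "diag (s1 ^ (n' - n)) (s2 ^ (n' - n)) q = bv_const d * q"
    unfolding Q_def by (rule diag_shift[OF assms(1,2) nn(1)])
  then show ?thesis using nn(1) by (intro exI[of _ "n' - n"]) auto
qed

lemma monomial_of_eigen:
  fixes t l1 l2 d d' :: "'a::field_gcd"
  assumes "t \<noteq> 0" "\<not> root_of_unity t" "l1 \<noteq> 0" "l2 \<noteq> 0" "\<not> root_of_unity (l1 / l2)"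
    "k > 0" "k' > 0"
    "diag (t ^ k') (t ^ k') q = bv_const d' * q" "diag (l1 ^ k) (l2 ^ k) q = bv_const d * q"
    "coeff (coeff q i) j \<noteq> 0" "coeff (coeff q i') j' \<noteq> 0"
  shows "i = i' \<and> j = j'"
proof -
  have e1: "(t ^ k') ^ j * (t ^ k') ^ i = d'" if "coeff (coeff q i) j \<noteq> 0" for i j
    using arg_cong[OF assms(8), of "\<lambda>p. coeff (coeff p i) j"] that
    by (simp add: coeff_diag coeff_const_mult)
  have e2: "(l1 ^ k) ^ j * (l2 ^ k) ^ i = d" if "coeff (coeff q i) j \<noteq> 0" for i j
    using arg_cong[OF assms(9), of "\<lambda>p. coeff (coeff p i) j"] that
    by (simp add: coeff_diag coeff_const_mult)
  have "t ^ (k' * (i + j)) = t ^ (k' * (i' + j'))"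
    using e1[OF assms(10)] e1[OF assms(11)] by (simp add: power_mult power_add ac_simps)
  then have "k' * (i + j) = k' * (i' + j')" by (rule pow_inj[OF assms(1,2)])
  then have sij: "i + j = i' + j'" using assms(7) by simp
  define r where "r = l1 / l2"
  have l1r: "l1 = r * l2" using assms(4) by (simp add: r_def)
  have r0: "r \<noteq> 0" using assms(3,4) by (simp add: r_def)
  have f: "(l1 ^ k) ^ j * (l2 ^ k) ^ i = r ^ (k * j) * l2 ^ (k * (i + j))" for i j
  proof -
    have "(l1 ^ k) ^ j * (l2 ^ k) ^ i = l1 ^ (k * j) * l2 ^ (k * i)" by (simp add: power_mult)
    also have "\<dots> = r ^ (k * j) * (l2 ^ (k * j) * l2 ^ (k * i))" by (simp add: l1r power_mult_distrib)
    also have "\<dots> = r ^ (k * j) * l2 ^ (k * (i + j))" by (simp add: power_add[symmetric] distrib_left add.commute)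
    finally show ?thesis .
  qed
  have "r ^ (k * j) * l2 ^ (k * (i + j)) = r ^ (k * j') * l2 ^ (k * (i + j))"
    using e2[OF assms(10)] e2[OF assms(11)] f[of j i] f[of j' i'] sij by simp
  then have "r ^ (k * j) = r ^ (k * j')" using assms(4) by simp
  then have "k * j = k * j'" by (rule pow_inj[OF r0 assms(5)[folded r_def]])
  then have "j = j'" using assms(6) by simp
  with sij show ?thesis by simp
qed

lemma monomial_diag:
  assumes "\<And>i j i' j'. coeff (coeff q i) j \<noteq> 0 \<Longrightarrow> coeff (coeff q i') j' \<noteq> 0 \<Longrightarrow> i = i' \<and> j = j'"
    "coeff (coeff q i0) j0 \<noteq> 0"
  shows "diag s1 s2 q = bv_const (s1 ^ j0 * s2 ^ i0) * q"
proof (intro poly_eqI)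
  fix i j
  show "coeff (coeff (diag s1 s2 q) i) j = coeff (coeff (bv_const (s1 ^ j0 * s2 ^ i0) * q) i) j"
    using assms(1)[OF assms(2), of i j]
    by (cases "coeff (coeff q i) j = 0") (auto simp: coeff_diag coeff_const_mult)
qed


lemma subsingleton_finite: "(\<And>x y. x \<in> S \<Longrightarrow> y \<in> S \<Longrightarrow> x = y) \<Longrightarrow> finite S"
proof (cases "S = {}")
  case False
  then obtain x where "x \<in> S" by blast
  assume "\<And>x y. x \<in> S \<Longrightarrow> y \<in> S \<Longrightarrow> x = y"
  with \<open>x \<in> S\<close> have "S \<subseteq> {x}" by blast
  then show ?thesis by (rule finite_subset) simp
qed simp

lemma diag_finite:
  fixes l1 l2 t e :: "'a::field_gcd" and a b :: "'a poly poly"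
  assumes "t \<noteq> 0" "\<not> root_of_unity t" "l1 \<noteq> 0" "l2 \<noteq> 0" "\<not> root_of_unity (l1 / l2)"
    "a \<noteq> 0" "b \<noteq> 0" "coprime a b" "diag t t b = bv_const e * b"
  shows "finite {m. \<exists>g. \<not> is_unit g \<and> g dvd a \<and> g dvd diag (l1 ^ m) (l2 ^ m) b}"
proof -
  define S where "S p q = {m. normalize (diag (l1 ^ m) (l2 ^ m) q) = p}" for p q
  have sub: "{m. \<exists>g. \<not> is_unit g \<and> g dvd a \<and> g dvd diag (l1 ^ m) (l2 ^ m) b}
     \<subseteq> (\<Union>p\<in>prime_factors a. \<Union>q\<in>prime_factors b. S p q)"
  proof
    fix m assume "m \<in> {m. \<exists>g. \<not> is_unit g \<and> g dvd a \<and> g dvd diag (l1 ^ m) (l2 ^ m) b}"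
    then obtain g where g: "\<not> is_unit g" "g dvd a" "g dvd diag (l1 ^ m) (l2 ^ m) b" by blast
    have "g \<noteq> 0" using g(2) assms(6) by auto
    obtain p where p: "p dvd g" "prime p" using prime_divisor_exists[OF \<open>g \<noteq> 0\<close> g(1)] by blast
    have l0: "l1 ^ m \<noteq> 0" "l2 ^ m \<noteq> 0" using assms(3,4) by auto
    define q0 where "q0 = diag (inverse (l1 ^ m)) (inverse (l2 ^ m)) p"
    have "q0 dvd b"
    proof -
      interpret comm_ring_hom "diag (inverse (l1 ^ m)) (inverse (l2 ^ m))" by (rule diag_hom)
      have "p dvd diag (l1 ^ m) (l2 ^ m) b" using p(1) g(3) by (rule dvd_trans)
      from hom_dvd[OF this] show ?thesis unfolding q0_def diag_inv(1)[OF l0] .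
    qed
    have "prime_elem q0" unfolding q0_def using l0 p(2) by (intro diag_prime_elem) auto
    then have q: "normalize q0 \<in> prime_factors b"
      using \<open>q0 dvd b\<close> assms(7) by (intro prime_factorsI) auto
    have pa: "p \<in> prime_factors a" using p g(2) assms(6) by (intro prime_factorsI) (auto intro: dvd_trans)
    have "q0 \<noteq> 0" using \<open>prime_elem q0\<close> by auto
    from assoc_const[of q0 "normalize q0", OF _ this] obtain c where c: "c \<noteq> 0" "normalize q0 = bv_const c * q0"
      by auto
    have dq: "diag (l1 ^ m) (l2 ^ m) q0 = p" unfolding q0_def by (rule diag_inv(2)[OF l0])
    have "diag (l1 ^ m) (l2 ^ m) (normalize q0) = bv_const c * p"
      by (simp only: c(2) diag_const_mult dq)
    then have "normalize (diag (l1 ^ m) (l2 ^ m) (normalize q0)) = p"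
    proof -
      have "is_unit (bv_const c)" using c(1) is_unit_bv by blast
      then show ?thesis using p(2) \<open>diag (l1 ^ m) (l2 ^ m) (normalize q0) = bv_const c * p\<close>
        by (simp add: normalize_prime)
    qed
    then show "m \<in> (\<Union>p\<in>prime_factors a. \<Union>q\<in>prime_factors b. S p q)"
      using pa q unfolding S_def by blast
  qed
  have fin: "finite (S p q)" if pq: "p \<in> prime_factors a" "q \<in> prime_factors b" for p q
  proof -
    have contra: False if mm: "m < m'" "m \<in> S p q" "m' \<in> S p q" for m m'
    proof -
      have qp: "prime q" using pq(2) by auto
      have "prime_elem (diag (l1 ^ m) (l2 ^ m) q)" using qp assms(3,4) by (intro diag_prime_elem) auto
      then have nz: "diag (l1 ^ m) (l2 ^ m) q \<noteq> 0" by auto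
      have "normalize (diag (l1 ^ m) (l2 ^ m) q) = normalize (diag (l1 ^ m') (l2 ^ m') q)"
        using mm(2,3) by (simp add: S_def)
      from assoc_const[OF this nz] obtain d where
        "diag (l1 ^ m') (l2 ^ m') q = bv_const d * diag (l1 ^ m) (l2 ^ m) q" by blast
      from diag_shift[OF assms(3,4) mm(1) this]
      have ek: "diag (l1 ^ (m' - m)) (l2 ^ (m' - m)) q = bv_const d * q" .
      obtain k' d' where ek': "k' > 0" "diag (t ^ k') (t ^ k') q = bv_const d' * q"
        using eigen_factor[OF assms(1,1,7,9), of q] qp in_prime_factors_imp_dvd[OF pq(2)] by auto
      have "q \<noteq> 0" using qp by auto
      then have "coeff q (degree q) \<noteq> 0" by simp
      then have "coeff (coeff q (degree q)) (degree (coeff q (degree q))) \<noteq> 0" by simp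
      then obtain i0 j0 where ij0: "coeff (coeff q i0) j0 \<noteq> 0" by blast
      have "diag (l1 ^ m) (l2 ^ m) q = bv_const ((l1 ^ m) ^ j0 * (l2 ^ m) ^ i0) * q"
        by (rule monomial_diag[OF _ ij0], rule monomial_of_eigen[OF assms(1-5) _ ek'(1) ek'(2) ek])
          (use mm(1) in auto)
      moreover have "is_unit (bv_const ((l1 ^ m) ^ j0 * (l2 ^ m) ^ i0))"
        unfolding is_unit_bv using assms(3,4)
        by (intro exI[of _ "(l1 ^ m) ^ j0 * (l2 ^ m) ^ i0"]) simp
      ultimately have "normalize (diag (l1 ^ m) (l2 ^ m) q) = q"
        using qp is_unit_bv by (simp add: normalize_prime)
      with mm(2) have "p = q" by (simp add: S_def)
      then have "q dvd a" "q dvd b" using pq by auto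
      with assms(8) have "is_unit q" by (rule coprime_common_divisor)
      with qp show False by auto
    qed
    show ?thesis
    proof (rule subsingleton_finite)
      fix x y assume "x \<in> S p q" "y \<in> S p q"
      then show "x = y" using contra[of x y] contra[of y x] by (metis linorder_neqE_nat)
    qed
  qed
  show ?thesis
    by (rule finite_subset[OF sub]) (auto intro!: finite_UN_I fin)
qed

lemma eig_eq:
  fixes u v l :: "'a::field"
  assumes "eigenvalue (shift_matrix u v) l"
  shows "l * l = v * l + u"
proof -
  have dr: "dim_row (shift_matrix u v) = 2" by (simp add: shift_matrix_def mat_of_rows_list_def)
  obtain w where w: "w \<in> carrier_vec 2" "w \<noteq> 0\<^sub>v 2" "shift_matrix u v *\<^sub>v w = l \<cdot>\<^sub>v w"
    using assms unfolding eigenvalue_def eigenvector_def dr by blast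
  have dw: "dim_vec w = 2" using w(1) by auto
  have e0: "u * vec_index w 1 = l * vec_index w 0"
    using arg_cong[OF w(3), of "\<lambda>x. vec_index x 0"] dw
    by (simp add: shift_matrix_def mat_of_rows_list_def mult_mat_vec_def scalar_prod_def numeral_2_eq_2)
  have e1: "vec_index w 0 + v * vec_index w 1 = l * vec_index w 1"
    using arg_cong[OF w(3), of "\<lambda>x. vec_index x 1"] dw
    by (simp add: shift_matrix_def mat_of_rows_list_def mult_mat_vec_def scalar_prod_def numeral_2_eq_2)
  have "vec_index w 1 \<noteq> 0"
  proof
    assume h: "vec_index w 1 = 0"
    then have "vec_index w 0 = 0" using e1 by simp
    with h have "w = 0\<^sub>v 2" using dw by (intro eq_vecI) (auto simp: less_2_cases_iff)
    with w(2) show False by simp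
  qed
  have h0: "vec_index w 0 = (l - v) * vec_index w 1" using e1 by (simp add: algebra_simps)
  have "(u - l * (l - v)) * vec_index w 1 = u * vec_index w 1 - l * ((l - v) * vec_index w 1)"
    by (simp add: algebra_simps)
  also have "\<dots> = 0" using e0 h0 by simp
  finally have "(u - l * (l - v)) * vec_index w 1 = 0" .
  with \<open>vec_index w 1 \<noteq> 0\<close> have "u = l * (l - v)" by simp
  then show ?thesis by (simp add: algebra_simps)
qed

lemma bv_eval_mult: "bv_eval (p * q) x y = bv_eval p x y * bv_eval q x y"
proof -
  interpret comm_ring_hom "\<lambda>p. bv_eval p x y" by (rule bv_eval_hom)
  show ?thesis by (rule hom_mult)
qed
lemma bv_eval_add: "bv_eval (p + q) x y = bv_eval p x y + bv_eval q x y"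
proof -
  interpret comm_ring_hom "\<lambda>p. bv_eval p x y" by (rule bv_eval_hom)
  show ?thesis by (rule hom_add)
qed
lemma bv_eval_minus: "bv_eval (p - q) x y = bv_eval p x y - bv_eval q x y"
proof -
  interpret comm_ring_hom "\<lambda>p. bv_eval p x y" by (rule bv_eval_hom)
  show ?thesis by (rule hom_minus)
qed

lemma homog_scale:
  assumes "homogeneous b"
  shows "\<exists>d. diag t t b = bv_const (t ^ d) * b"
proof -
  obtain d where d: "\<And>i j. coeff (coeff b i) j \<noteq> 0 \<Longrightarrow> i + j = d"
    using assms unfolding homogeneous_def by blast
  have "diag t t b = bv_const (t ^ d) * b"
  proof (intro poly_eqI)
    fix i j
    show "coeff (coeff (diag t t b) i) j = coeff (coeff (bv_const (t ^ d) * b) i) j"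
      using d[of i j] by (cases "coeff (coeff b i) j = 0") (auto simp: coeff_diag coeff_const_mult power_add[symmetric] add.commute)
  qed
  then show ?thesis by blast
qed

theorem theorem2p3:
  fixes u v l1 l2 :: "'a::field_gcd" and a b :: "'a poly poly"
  assumes "u \<noteq> 0"
    and "eigenvalue (shift_matrix u v) l1" and "eigenvalue (shift_matrix u v) l2"
    and "l1 \<noteq> l2"
    and "\<not> root_of_unity (l1 / l2)"
    and "a \<noteq> 0" and "b \<noteq> 0"
    and "homogeneous a" and "homogeneous b"
    and "coprime a b"
  shows "finite (spread u v a b)"
proof -
  have e1: "l1 * l1 = v * l1 + u" by (rule eig_eq[OF assms(2)])
  have e2: "l2 * l2 = v * l2 + u" by (rule eig_eq[OF assms(3)])
  have "(l1 - l2) * (l1 + l2 - v) = 0" using e1 e2 by (simp add: algebra_simps)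
  then have vv: "v = l1 + l2" using assms(4) by simp
  have "u + l1 * l2 = 0" using e1 unfolding vv by (simp add: algebra_simps)
  then have uu: "u = - (l1 * l2)" by (simp add: eq_neg_iff_add_eq_0)
  have l10: "l1 \<noteq> 0" and l20: "l2 \<noteq> 0" using assms(1) uu by auto
  define t where "t = l1 / l2"
  have t0: "t \<noteq> 0" using l10 l20 by (simp add: t_def)
  define w where "w = inverse (l1 - l2)"
  have w1: "w * (l1 - l2) = 1" using assms(4) by (simp add: w_def)
  define X :: "'a poly poly" where "X = bv_beta - bv_const l2 * bv_alpha"
  define Y :: "'a poly poly" where "Y = bv_beta - bv_const l1 * bv_alpha"
  define Pa :: "'a poly poly" where "Pa = bv_const w * (bv_alpha - bv_beta)"
  define Pb :: "'a poly poly" where "Pb = bv_const w * (bv_const l1 * bv_alpha - bv_const l2 * bv_beta)"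
  define \<phi> where "\<phi> p = bv_eval p X Y" for p
  define \<psi> where "\<psi> p = bv_eval p Pa Pb" for p
  have hphi: "comm_ring_hom \<phi>" unfolding \<phi>_def[abs_def] by (rule bv_eval_hom)
  have hpsi: "comm_ring_hom \<psi>" unfolding \<psi>_def[abs_def] by (rule bv_eval_hom)
  have psiphi: "\<psi> (\<phi> p) = p" for p
  proof -
    have "bv_eval X Pa Pb = bv_const (w * (l1 - l2)) * bv_alpha"
      by (simp add: X_def Pa_def Pb_def bv_eval_mult bv_eval_minus bvc.hom_mult bvc.hom_minus algebra_simps)
    moreover have "bv_eval Y Pa Pb = bv_const (w * (l1 - l2)) * bv_beta"
      by (simp add: Y_def Pa_def Pb_def bv_eval_mult bv_eval_minus bvc.hom_mult bvc.hom_minus algebra_simps)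
    ultimately show ?thesis
      unfolding \<phi>_def \<psi>_def bv_eval_comp by (simp add: w1 bvc.hom_one bv_eval_id)
  qed
  have phipsi: "\<phi> (\<psi> p) = p" for p
  proof -
    have "bv_eval Pa X Y = bv_const (w * (l1 - l2)) * bv_alpha"
      by (simp add: X_def Y_def Pa_def bv_eval_mult bv_eval_minus bvc.hom_mult bvc.hom_minus algebra_simps)
    moreover have "bv_eval Pb X Y = bv_const (w * (l1 - l2)) * bv_beta"
      by (simp add: X_def Y_def Pb_def bv_eval_mult bv_eval_minus bvc.hom_mult bvc.hom_minus algebra_simps)
    ultimately show ?thesis
      unfolding \<phi>_def \<psi>_def bv_eval_comp by (simp add: w1 bvc.hom_one bv_eval_id)
  qed
  have sigphi: "bv_sigma u v (\<phi> p) = \<phi> (diag l1 l2 p)" for p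
  proof -
    have "bv_eval X bv_beta (bv_const u * bv_alpha + bv_const v * bv_beta) = bv_eval (bv_const l1 * bv_alpha) X Y"
      by (simp add: X_def Y_def uu vv bv_eval_mult bv_eval_minus bvc.hom_mult bvc.hom_minus bvc.hom_add bvc.hom_uminus algebra_simps)
    moreover have "bv_eval Y bv_beta (bv_const u * bv_alpha + bv_const v * bv_beta) = bv_eval (bv_const l2 * bv_beta) X Y"
      by (simp add: X_def Y_def uu vv bv_eval_mult bv_eval_minus bvc.hom_mult bvc.hom_minus bvc.hom_add bvc.hom_uminus algebra_simps)
    ultimately show ?thesis
      unfolding \<phi>_def bv_sigma_def diag_def bv_eval_comp by simp
  qed
  have sigm: "(bv_sigma u v ^^ m) (\<phi> p) = \<phi> (diag (l1 ^ m) (l2 ^ m) p)" for m p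
  proof (induction m)
    case 0 then show ?case by (simp add: diag_one)
  next
    case (Suc m)
    then show ?case by (simp add: sigphi diag_comp)
  qed
  have scal: "diag t t (\<psi> p) = \<psi> (diag t t p)" for p
  proof -
    have "bv_eval Pa (bv_const t * bv_alpha) (bv_const t * bv_beta) = bv_eval (bv_const t * bv_alpha) Pa Pb"
      by (simp add: Pa_def bv_eval_mult bv_eval_minus algebra_simps)
    moreover have "bv_eval Pb (bv_const t * bv_alpha) (bv_const t * bv_beta) = bv_eval (bv_const t * bv_beta) Pa Pb"
      by (simp add: Pb_def bv_eval_mult bv_eval_minus algebra_simps)
    ultimately show ?thesis
      unfolding \<psi>_def diag_def bv_eval_comp by simp
  qed
  define a' where "a' = \<psi> a"
  define b' where "b' = \<psi> b"
  have aa: "a = \<phi> a'" and bb: "b = \<phi> b'" by (simp_all add: a'_def b'_def phipsi)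
  interpret phi: comm_ring_hom \<phi> by (rule hphi)
  interpret psi: comm_ring_hom \<psi> by (rule hpsi)
  have a'0: "a' \<noteq> 0" using assms(6) aa by auto
  have b'0: "b' \<noteq> 0" using assms(7) bb by auto
  have cop: "coprime a' b'"
  proof (rule coprimeI)
    fix c assume "c dvd a'" "c dvd b'"
    then have "\<phi> c dvd a" "\<phi> c dvd b" unfolding aa bb by (auto intro: phi.hom_dvd)
    then have "is_unit (\<phi> c)" by (rule coprime_common_divisor[OF assms(10)])
    then have "is_unit (\<psi> (\<phi> c))" by (rule psi.hom_dvd_1)
    then show "is_unit c" by (simp add: psiphi)
  qed
  obtain d where "diag t t b = bv_const (t ^ d) * b" using homog_scale[OF assms(9)] by blast
  then have sb: "diag t t b' = bv_const (t ^ d) * b'"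
    unfolding b'_def scal by (simp add: \<psi>_def bv_eval_mult)
  have "finite {m. \<exists>g. \<not> is_unit g \<and> g dvd a' \<and> g dvd diag (l1 ^ m) (l2 ^ m) b'}"
    by (rule diag_finite[OF t0 assms(5)[folded t_def] l10 l20 assms(5) a'0 b'0 cop sb])
  moreover have "spread u v a b \<subseteq> {m. \<exists>g. \<not> is_unit g \<and> g dvd a' \<and> g dvd diag (l1 ^ m) (l2 ^ m) b'}"
  proof
    fix m assume "m \<in> spread u v a b"
    then have td: "total_degree (gcd a ((bv_sigma u v ^^ m) b)) > 0" by (simp add: spread_def)
    define g where "g = gcd a ((bv_sigma u v ^^ m) b)"
    have gu: "\<not> is_unit g"
    proof
      assume "is_unit g"
      then obtain c where "g = bv_const c" by (auto simp: is_unit_bv)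
      with td show False by (simp add: g_def total_degree_const)
    qed
    have "g dvd a" "g dvd \<phi> (diag (l1 ^ m) (l2 ^ m) b')"
      unfolding g_def by (simp_all add: bb sigm[symmetric])
    then have "\<psi> g dvd a'" "\<psi> g dvd diag (l1 ^ m) (l2 ^ m) b'"
      unfolding a'_def by (auto dest: psi.hom_dvd simp: psiphi)
    moreover have "\<not> is_unit (\<psi> g)"
    proof
      assume "is_unit (\<psi> g)"
      then have "is_unit (\<phi> (\<psi> g))" by (rule phi.hom_dvd_1)
      with gu show False by (simp add: phipsi)
    qed
    ultimately show "m \<in> {m. \<exists>g. \<not> is_unit g \<and> g dvd a' \<and> g dvd diag (l1 ^ m) (l2 ^ m) b'}"
      by blast
  qed
  ultimately show ?thesis by (rule finite_subset[rotated])
qed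

end
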